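(* With notation as below, the following sequences of group homomorphisms (arising from the long exact cohomology sequences of $0\to Q_\bullet\to\widehat{Y}_\bullet\to\widehat{Y}_\bullet/Q_\bullet\to0$, $Y\in\{A,AA,Q\}$) are exact: $$0\to Q_0\to Q_0\to \widehat{A}_0/Q_0\to Q_1\to Q_1/A_1\to\widehat{A}_1/Q_1\to Q_2\to Q_2/A_2\to\widehat{A}_2/Q_2\to\cdots$$ $$0\to Q_0\to Q_0\to \widehat{AA}_0/Q_0\to Q_1\to Q_1/AA_1\to\widehat{AA}_1/Q_1\to Q_2\to Q_2/AA_2\to\widehat{AA}_2/Q_2\to\cdots$$ $$0\to Q_0\to Q_0\to \widehat{Q}_0/Q_0\to Q_1\to 0\to\widehat{Q}_1/Q_1\to Q_2\to 0\to\cdots$$ Here $H^0(Q_\bullet)=Q_0$, $H^0(\widehat{Y}_\bullet)=Q_0$, $H^n(Q_\bullet)=Q_n$, $H^n(\widehat{A}_\bullet)=Q_n/A_n$, $H^n(\widehat{AA}_\bullet)=Q_n/AA_n$, $H^n(\widehat{Q}_\bullet)=0$ for $n\ge1$, and $H^n(\widehat{Y}_\bullet/Q_\bullet)=\widehat{Y}_n/Q_n\cong Y_{n+1}$ for $n\ge0$. In particular, for every $n\ge1$, $0\to A_n\to Q_n\to Q_n/A_n\to0$ and $0\to AA_n\to Q_n\to Q_n/AA_n\to0$ are exact and $\widehat{Q}_n/Q_n\cong Q_{n+1}$.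
   Context: A po-group is an abelian group with a translation-invariant partial order; $G^+=\{g:0\le g\}$. An atom is a minimal element of $G^+\setminus\{0\}$; $A(G)$ is the subgroup generated by atoms; $AA(G)$ is the subgroup generated by $\{g\in G^+:\exists a\in A(G)\cap G^+,\ g+a\in A(G)\}$; $Q(G)$ is the subgroup generated by $\{g\in G^+:\exists h\in G^+,\ g+h\in A(G)\}$. Quasi-atomic quotient sequence: $G_0=G$, $G_{n+1}=G_n/Q(G_n)$, $\pi_n:G_n\to G_{n+1}$ natural projection. $A_n=A(G_n)$, $AA_n=AA(G_n)$, $Q_n=Q(G_n)$, $\widehat{A}_n=\pi_n^{-1}(A_{n+1})$, $\widehat{AA}_n=\pi_n^{-1}(AA_{n+1})$, $\widehat{Q}_n=\pi_n^{-1}(Q_{n+1})$. Each of $Q_\bullet,\widehat{Y}_\bullet,\widehat{Y}_\bullet/Q_\bullet$ ($Y\in\{A,AA,Q\}$) is a cochain complex, zero in negative degrees, with differentials $\delta_n$ induced by $\pi_n$; the cohomology is $H^n(X_\bullet)=\ker\delta_n/\operatorname{Im}\delta_{n-1}$ (as abelian groups). *)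

theory Defs
  imports Main
begin

text \<open>A po-group is modelled as a type of class ordered_ab_group_add
(abelian group with translation-invariant partial order).  The iterated
quotients G_n are presented as G / K for a subgroup K of G; every subgroup
of G / K is represented by its preimage in G (a subgroup containing K), and
every subquotient by a pair (N, D) of subgroups of G with D contained in N,
standing for N / D.\<close>

definition add_subgroup :: "'a::ab_group_add set \<Rightarrow> bool" where
  "add_subgroup H \<longleftrightarrow> 0 \<in> H \<and> (\<forall>x\<in>H. \<forall>y\<in>H. x + y \<in> H) \<and> (\<forall>x\<in>H. - x \<in> H)"

definition gen :: "'a::ab_group_add set \<Rightarrow> 'a set" where
  "gen S = \<Inter> {H. add_subgroup H \<and> S \<subseteq> H}"

definition set_sum :: "'a::ab_group_add set \<Rightarrow> 'a set \<Rightarrow> 'a set" where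
  "set_sum A B = {a + b | a b. a \<in> A \<and> b \<in> B}"

text \<open>Positive cone of G / K (preimage in G): the image of G^+.\<close>
definition qpos :: "'a::ordered_ab_group_add set \<Rightarrow> 'a set" where
  "qpos K = {x. \<exists>k\<in>K. 0 \<le> x + k}"

text \<open>Atoms of G / K (preimage in G): minimal elements of (G/K)^+ minus 0.
  In G / K: y \<le> x iff x - y \<in> qpos K, and y = x iff x - y \<in> K.\<close>
definition qatoms :: "'a::ordered_ab_group_add set \<Rightarrow> 'a set" where
  "qatoms K = {x. x \<in> qpos K \<and> x \<notin> K \<and>
     (\<forall>y. y \<in> qpos K \<and> y \<notin> K \<and> x - y \<in> qpos K \<longrightarrow> x - y \<in> K)}"

text \<open>Preimages in G of A(G/K), AA(G/K), Q(G/K).\<close>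
definition qA :: "'a::ordered_ab_group_add set \<Rightarrow> 'a set" where
  "qA K = gen (K \<union> qatoms K)"

definition qAA :: "'a::ordered_ab_group_add set \<Rightarrow> 'a set" where
  "qAA K = gen (K \<union> {g. g \<in> qpos K \<and>
      (\<exists>a. a \<in> qA K \<and> a \<in> qpos K \<and> g + a \<in> qA K)})"

definition qQ :: "'a::ordered_ab_group_add set \<Rightarrow> 'a set" where
  "qQ K = gen (K \<union> {g. g \<in> qpos K \<and> (\<exists>h. h \<in> qpos K \<and> g + h \<in> qA K)})"

text \<open>G_n = G / Kseq n; Q_n = Kseq (n+1) / Kseq n.\<close>
primrec Kseq :: "nat \<Rightarrow> 'a::ordered_ab_group_add set" where
  "Kseq 0 = {0}"
| "Kseq (Suc n) = qQ (Kseq n)"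

datatype ykind = YA | YAA | YQ

fun Yrel :: "ykind \<Rightarrow> 'a::ordered_ab_group_add set \<Rightarrow> 'a set" where
  "Yrel YA K = qA K"
| "Yrel YAA K = qAA K"
| "Yrel YQ K = qQ K"

text \<open>A cochain complex X_n = S n / T n whose differentials are induced by the
  projections pi_n, i.e. by the identity on representatives.\<close>

definition Qcx :: "(nat \<Rightarrow> 'a::ordered_ab_group_add set) \<times> (nat \<Rightarrow> 'a set)" where
  "Qcx = ((\<lambda>n. Kseq (Suc n)), (\<lambda>n. Kseq n))"

text \<open>hat Y_bullet: hat Y_n = pi_n^{-1}(Y_{n+1}) \<subseteq> G_n\<close>
definition Ycx :: "ykind \<Rightarrow> (nat \<Rightarrow> 'a::ordered_ab_group_add set) \<times> (nat \<Rightarrow> 'a set)" where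
  "Ycx Y = ((\<lambda>n. Yrel Y (Kseq (Suc n))), (\<lambda>n. Kseq n))"

definition YQcx :: "ykind \<Rightarrow> (nat \<Rightarrow> 'a::ordered_ab_group_add set) \<times> (nat \<Rightarrow> 'a set)" where
  "YQcx Y = ((\<lambda>n. Yrel Y (Kseq (Suc n))), (\<lambda>n. Kseq (Suc n)))"

text \<open>H^n(X) = ker delta_n / Im delta_{n-1}, as a subquotient (numerator, denominator):
  representatives of ker delta_n are S n \<inter> T (n+1); of Im delta_{n-1} are
  S (n-1) + T n (resp. T 0 when n = 0, since X_{-1} = 0).\<close>
definition coh :: "(nat \<Rightarrow> 'a::ab_group_add set) \<times> (nat \<Rightarrow> 'a set) \<Rightarrow> nat \<Rightarrow> 'a set \<times> 'a set" where
  "coh X n = (fst X n \<inter> snd X (Suc n),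
              (if n = 0 then snd X 0 else set_sum (fst X (n - 1)) (snd X n)))"

text \<open>Long cohomology sequence of 0 -> X1 -> X2 -> X3 -> 0:
  H^0(X1), H^0(X2), H^0(X3), H^1(X1), ...; all maps (inclusion-induced,
  projection-induced, connecting) are induced by the identity on representatives.\<close>
definition les :: "(nat \<Rightarrow> 'a::ab_group_add set) \<times> (nat \<Rightarrow> 'a set) \<Rightarrow>
    (nat \<Rightarrow> 'a set) \<times> (nat \<Rightarrow> 'a set) \<Rightarrow> (nat \<Rightarrow> 'a set) \<times> (nat \<Rightarrow> 'a set) \<Rightarrow>
    nat \<Rightarrow> 'a set \<times> 'a set" where
  "les X1 X2 X3 k = (if k mod 3 = 0 then coh X1 (k div 3)
                     else if k mod 3 = 1 then coh X2 (k div 3) else coh X3 (k div 3))"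

definition subquot :: "'a::ab_group_add set \<times> 'a set \<Rightarrow> bool" where
  "subquot X \<longleftrightarrow> add_subgroup (fst X) \<and> add_subgroup (snd X) \<and> snd X \<subseteq> fst X"

text \<open>x + D1 \<mapsto> x + D2 is a well-defined homomorphism N1/D1 -> N2/D2\<close>
definition ind_hom :: "'a::ab_group_add set \<times> 'a set \<Rightarrow> 'a set \<times> 'a set \<Rightarrow> bool" where
  "ind_hom X Y \<longleftrightarrow> fst X \<subseteq> fst Y \<and> snd X \<subseteq> snd Y"

text \<open>kernel of the map X2 -> X3 equals image of X1 -> X2 (on representatives)\<close>
definition exact_at :: "'a::ab_group_add set \<times> 'a set \<Rightarrow> 'a set \<times> 'a set \<Rightarrow> 'a set \<times> 'a set \<Rightarrow> bool" where
  "exact_at X1 X2 X3 \<longleftrightarrow>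
     {x \<in> fst X2. x \<in> snd X3} = {x \<in> fst X2. \<exists>y \<in> fst X1. x - y \<in> snd X2}"

definition inj_at :: "'a::ab_group_add set \<times> 'a set \<Rightarrow> 'a set \<times> 'a set \<Rightarrow> bool" where
  "inj_at X Y \<longleftrightarrow> (\<forall>x \<in> fst X. x \<in> snd Y \<longrightarrow> x \<in> snd X)"

definition surj_at :: "'a::ab_group_add set \<times> 'a set \<Rightarrow> 'a set \<times> 'a set \<Rightarrow> bool" where
  "surj_at X Y \<longleftrightarrow> (\<forall>x \<in> fst Y. \<exists>y \<in> fst X. x - y \<in> snd Y)"

definition exact_seq0 :: "(nat \<Rightarrow> 'a::ab_group_add set \<times> 'a set) \<Rightarrow> bool" where
  "exact_seq0 L \<longleftrightarrow> (\<forall>k. subquot (L k)) \<and> (\<forall>k. ind_hom (L k) (L (Suc k))) \<and>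
     inj_at (L 0) (L 1) \<and> (\<forall>k. exact_at (L k) (L (Suc k)) (L (Suc (Suc k))))"

definition short_exact :: "'a::ab_group_add set \<times> 'a set \<Rightarrow> 'a set \<times> 'a set \<Rightarrow> 'a set \<times> 'a set \<Rightarrow> bool" where
  "short_exact X Y Z \<longleftrightarrow> subquot X \<and> subquot Y \<and> subquot Z \<and> ind_hom X Y \<and> ind_hom Y Z \<and>
     inj_at X Y \<and> exact_at X Y Z \<and> surj_at Y Z"

end

theory Submission
  imports Defs
begin


lemma gen_sub: "add_subgroup (gen S)"
  unfolding gen_def add_subgroup_def by auto

lemma gen_incl: "S \<subseteq> gen S"
  unfolding gen_def by auto

lemma sub_diff: "add_subgroup H \<Longrightarrow> x \<in> H \<Longrightarrow> y \<in> H \<Longrightarrow> x - y \<in> H"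
  unfolding add_subgroup_def by (metis diff_conv_add_uminus)

lemma sub_0: "add_subgroup H \<Longrightarrow> 0 \<in> H"
  unfolding add_subgroup_def by auto

lemma sub_add: "add_subgroup H \<Longrightarrow> x \<in> H \<Longrightarrow> y \<in> H \<Longrightarrow> x + y \<in> H"
  unfolding add_subgroup_def by auto

lemma gen_least: "add_subgroup H \<Longrightarrow> S \<subseteq> H \<Longrightarrow> gen S \<subseteq> H"
  unfolding gen_def by auto

lemma Y_sub: "add_subgroup (Yrel Y K)"
  by (cases Y) (auto simp: qA_def qAA_def qQ_def gen_sub)

lemma K_in_Y: "add_subgroup (K::'a::ordered_ab_group_add set) \<Longrightarrow> K \<subseteq> Yrel Y K"
  by (cases Y) (auto simp: qA_def qAA_def qQ_def intro: subsetD[OF gen_incl])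

lemma qA_qAA: "add_subgroup (K::'a::ordered_ab_group_add set) \<Longrightarrow> qA K \<subseteq> qAA K"
proof -
  assume K: "add_subgroup K"
  have "qatoms K \<subseteq> qAA K"
  proof
    fix x assume x: "x \<in> qatoms K"
    have "0 \<in> qA K" using sub_0[OF gen_sub] unfolding qA_def .
    moreover have "0 \<in> qpos K" using sub_0[OF K] unfolding qpos_def by force
    moreover have "x \<in> qA K" using x unfolding qA_def by (auto intro: subsetD[OF gen_incl])
    ultimately show "x \<in> qAA K" using x gen_incl unfolding qAA_def qatoms_def
      by (auto intro!: subsetD[OF gen_incl] exI[of _ 0])
  qed
  moreover have "K \<subseteq> qAA K" unfolding qAA_def by (auto intro: subsetD[OF gen_incl])
  ultimately show ?thesis unfolding qA_def
    by (intro gen_least) (auto simp: qAA_def gen_sub)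
qed

lemma qAA_qQ: "qAA (K::'a::ordered_ab_group_add set) \<subseteq> qQ K"
  unfolding qAA_def qQ_def
proof (rule gen_least[OF gen_sub])
  let ?S = "K \<union> {g. g \<in> qpos K \<and> (\<exists>h. h \<in> qpos K \<and> g + h \<in> qA K)}"
  have "K \<union> {g. g \<in> qpos K \<and> (\<exists>a. a \<in> qA K \<and> a \<in> qpos K \<and> g + a \<in> qA K)} \<subseteq> ?S" by blast
  then show "K \<union> {g. g \<in> qpos K \<and> (\<exists>a. a \<in> qA K \<and> a \<in> qpos K \<and> g + a \<in> qA K)} \<subseteq> gen ?S"
    using gen_incl[of ?S] by (rule subset_trans)
qed

lemma Y_in_Q: "add_subgroup (K::'a::ordered_ab_group_add set) \<Longrightarrow> Yrel Y K \<subseteq> qQ K"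
proof -
  assume K: "add_subgroup K"
  show ?thesis
  proof (cases Y)
    case YA then show ?thesis using qA_qAA[OF K] qAA_qQ[of K] by simp
  next
    case YAA then show ?thesis using qAA_qQ[of K] by simp
  qed simp
qed

lemma K_sub: "add_subgroup (Kseq n)"
  by (cases n) (simp add: add_subgroup_def, simp add: qQ_def gen_sub)

lemma K_in_Y': "Kseq n \<subseteq> Yrel Y (Kseq n)"
  using K_in_Y[OF K_sub] .

lemma Y_in_K: "Yrel Y (Kseq n) \<subseteq> Kseq (Suc n)"
  using Y_in_Q[OF K_sub] by simp

declare Kseq.simps(2)[simp del]

lemma qQ_K[simp]: "qQ (Kseq n) = Kseq (Suc n)"
  by (simp add: Kseq.simps(2))

lemma K_mono: "Kseq n \<subseteq> Kseq (Suc n)"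
  using K_in_Y'[of n YQ] Y_in_K[of YQ n] by blast

lemma set_sum_absorb: "add_subgroup A \<Longrightarrow> B \<subseteq> A \<Longrightarrow> 0 \<in> B \<Longrightarrow> set_sum A B = A"
  unfolding set_sum_def by (auto intro: sub_add) (metis add.right_neutral)

lemma set_sum_absorb2: "add_subgroup B \<Longrightarrow> A \<subseteq> B \<Longrightarrow> 0 \<in> A \<Longrightarrow> set_sum A B = B"
  unfolding set_sum_def by (auto intro: sub_add) (metis add.left_neutral)

lemma cohQ: "coh Qcx n = (Kseq (Suc n), Kseq n)"
  unfolding coh_def Qcx_def
  by (cases n) (simp_all add: set_sum_absorb[OF K_sub subset_refl sub_0[OF K_sub]])

lemma cohY: "coh (Ycx Y) n = (Kseq (Suc n), if n = 0 then Kseq 0 else Yrel Y (Kseq n))"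
proof -
  have "Yrel Y (Kseq (Suc n)) \<inter> Kseq (Suc n) = Kseq (Suc n)" using K_in_Y' by blast
  moreover have "n \<noteq> 0 \<Longrightarrow> set_sum (Yrel Y (Kseq (n - 1 + 1))) (Kseq n) = Yrel Y (Kseq n)"
    using set_sum_absorb[OF Y_sub K_in_Y' sub_0[OF K_sub]] by simp
  ultimately show ?thesis unfolding coh_def Ycx_def by auto
qed

lemma cohYQ: "coh (YQcx Y) n = (Yrel Y (Kseq (Suc n)), Kseq (Suc n))"
proof -
  have "Yrel Y (Kseq (Suc n)) \<inter> Kseq (Suc (Suc n)) = Yrel Y (Kseq (Suc n))" using Y_in_K by blast
  moreover have "n \<noteq> 0 \<Longrightarrow> set_sum (Yrel Y (Kseq (n - 1 + 1))) (Kseq (Suc n)) = Kseq (Suc n)"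
    using set_sum_absorb2[OF K_sub Y_in_K sub_0[OF Y_sub]] by (cases n) auto
  ultimately show ?thesis unfolding coh_def YQcx_def by auto
qed

lemma les3: "les X1 X2 X3 (3*n) = coh X1 n" "les X1 X2 X3 (3*n+1) = coh X2 n"
  "les X1 X2 X3 (3*n+2) = coh X3 n"
proof -
  have h: "(3*n::nat) mod 3 = 0" "(3*n::nat) div 3 = n" "(3*n+1::nat) mod 3 = 1" "(3*n+1::nat) div 3 = n"
    "(3*n+2::nat) mod 3 = 2" "(3*n+2::nat) div 3 = n" by presburger+
  show "les X1 X2 X3 (3*n) = coh X1 n" "les X1 X2 X3 (3*n+1) = coh X2 n"
    "les X1 X2 X3 (3*n+2) = coh X3 n" unfolding les_def by (simp_all only: h) simp_all
qed

lemma dec: fixes P :: "nat \<Rightarrow> bool"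
  assumes a: "\<And>n. P (3*n)" "\<And>n. P (3*n+1)" "\<And>n. P (3*n+2)"
  shows "P k"
proof -
  have "k = 3*(k div 3) + k mod 3" by simp
  moreover have "k mod 3 = 0 \<or> k mod 3 = 1 \<or> k mod 3 = 2" by auto
  ultimately show "P k" using a by (metis add.right_neutral)
qed

lemma exact_gen:
  assumes "0 \<in> B2" "add_subgroup B3" "A2 \<inter> B3 \<subseteq> A1" "A1 \<subseteq> B3" "B2 \<subseteq> B3"
  shows "exact_at (A1, B1) (A2, B2) (A3, B3)"
  unfolding exact_at_def fst_conv snd_conv
proof (intro Collect_cong conj_cong refl iffI)
  fix x assume "x \<in> A2" "x \<in> B3"
  then show "\<exists>y\<in>A1. x - y \<in> B2" using assms by (intro bexI[of _ x]) auto
next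
  fix x assume "\<exists>y\<in>A1. x - y \<in> B2"
  then obtain y where y: "y \<in> A1" "x - y \<in> B2" by blast
  have "y + (x - y) \<in> B3" using y assms by (intro sub_add[OF assms(2)]) auto
  then show "x \<in> B3" by simp
qed

lemma sq_K: "subquot (Kseq (Suc n), Kseq n)"
  unfolding subquot_def using K_sub K_mono by auto

lemma sq_Y: "subquot (Kseq (Suc n), Yrel Y (Kseq n))"
  unfolding subquot_def fst_conv snd_conv using K_sub Y_sub Y_in_K by blast

lemma sq_YK: "subquot (Yrel Y (Kseq n), Kseq n)"
  unfolding subquot_def fst_conv snd_conv using K_sub Y_sub K_in_Y' by blast

lemma exact_les: "exact_seq0 (les (Qcx :: (nat \<Rightarrow> 'a::ordered_ab_group_add set) \<times> _) (Ycx Y) (YQcx Y))"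
proof -
  let ?L = "les (Qcx :: (nat \<Rightarrow> 'a set) \<times> _) (Ycx Y) (YQcx Y)"
  have L0: "?L (3*n) = (Kseq (Suc n), Kseq n)" for n by (simp add: les3 cohQ)
  have L1: "?L (3*n+1) = (Kseq (Suc n), if n = 0 then Kseq 0 else Yrel Y (Kseq n))" for n
    by (simp only: les3 cohY)
  have L2: "?L (3*n+2) = (Yrel Y (Kseq (Suc n)), Kseq (Suc n))" for n by (simp only: les3 cohYQ)
  have L3: "?L (3*n+3) = (Kseq (Suc (Suc n)), Kseq (Suc n))" for n
    using L0[of "Suc n"] by (simp add: algebra_simps)
  have L4: "?L (3*n+4) = (Kseq (Suc (Suc n)), Yrel Y (Kseq (Suc n)))" for n
    using L1[of "Suc n"] by (simp add: algebra_simps)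
  have sq: "subquot (?L k)" for k
  proof (rule dec[of "\<lambda>k. subquot (?L k)" k])
    fix n show "subquot (?L (3*n))" using L0 sq_K by simp
    show "subquot (?L (3*n+1))" unfolding L1 using sq_Y[of n Y] sq_K[of 0] by (cases n) auto
    show "subquot (?L (3*n+2))" unfolding L2 by (rule sq_YK)
  qed
  have ih: "ind_hom (?L k) (?L (Suc k))" for k
  proof (rule dec[of "\<lambda>k. ind_hom (?L k) (?L (Suc k))" k])
    fix n
    have a: "?L (Suc (3*n)) = ?L (3*n+1)" "?L (Suc (3*n+1)) = ?L (3*n+2)" "?L (Suc (3*n+2)) = ?L (3*n+3)" by (simp_all add: numeral_3_eq_3)
    show "ind_hom (?L (3*n)) (?L (Suc (3*n)))" unfolding a L0 L1 using K_in_Y'[of n Y]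
      unfolding ind_hom_def by auto
    show "ind_hom (?L (3*n+1)) (?L (Suc (3*n+1)))" unfolding a L1 L2 using K_in_Y'[of "Suc n" Y]
      Y_in_K[of Y n] K_mono[of 0]
      unfolding ind_hom_def by (cases n) auto
    show "ind_hom (?L (3*n+2)) (?L (Suc (3*n+2)))" unfolding a L2 L3 using Y_in_K[of Y "Suc n"]
      unfolding ind_hom_def by auto
  qed
  have inj: "inj_at (?L 0) (?L 1)" using L0[of 0] L1[of 0] unfolding inj_at_def by simp
  have ex: "exact_at (?L k) (?L (Suc k)) (?L (Suc (Suc k)))" for k
  proof (rule dec[of "\<lambda>k. exact_at (?L k) (?L (Suc k)) (?L (Suc (Suc k)))" k])
    fix n
    have a: "?L (Suc (3*n)) = ?L (3*n+1)" "?L (Suc (Suc (3*n))) = ?L (3*n+2)" by simp_all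
    show "exact_at (?L (3*n)) (?L (Suc (3*n))) (?L (Suc (Suc (3*n))))"
      unfolding a L0 L1 L2 using K_in_Y'[of "Suc n" Y] Y_in_K[of Y n] K_mono[of 0] sub_0[OF Y_sub]
      by (intro exact_gen sub_0[OF Y_sub] sub_0[OF K_sub] K_sub Y_sub) (auto split: if_splits)
    have b: "?L (Suc (3*n+1)) = ?L (3*n+2)" "?L (Suc (Suc (3*n+1))) = ?L (3*n+3)" by (simp_all add: eval_nat_numeral)
    show "exact_at (?L (3*n+1)) (?L (Suc (3*n+1))) (?L (Suc (Suc (3*n+1))))"
      unfolding b L1 L2 L3
      by (intro exact_gen sub_0[OF Y_sub] sub_0[OF K_sub] K_sub Y_sub) auto
    have c: "?L (Suc (3*n+2)) = ?L (3*n+3)" "?L (Suc (Suc (3*n+2))) = ?L (3*n+4)" by (simp_all add: eval_nat_numeral)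
    show "exact_at (?L (3*n+2)) (?L (Suc (3*n+2))) (?L (Suc (Suc (3*n+2))))"
      unfolding c L2 L3 L4 using K_in_Y'[of "Suc n" Y]
      by (intro exact_gen sub_0[OF Y_sub] sub_0[OF K_sub] K_sub Y_sub) auto
  qed
  show ?thesis unfolding exact_seq0_def using sq ih inj ex by blast
qed

lemma short_ex: "short_exact (Yrel Y (Kseq n), Kseq n) (Kseq (Suc n), Kseq n) (Kseq (Suc n), Yrel Y (Kseq n))"
proof -
  have a: "Kseq n \<subseteq> Yrel Y (Kseq n)" "Yrel Y (Kseq n) \<subseteq> Kseq (Suc n)" using K_in_Y'[of n Y] Y_in_K[of Y n] by auto
  have s: "surj_at (Kseq (Suc n), Kseq n) (Kseq (Suc n), Yrel Y (Kseq n))"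
    unfolding surj_at_def fst_conv snd_conv
  proof
    fix x assume "x \<in> Kseq (Suc n)" then show "\<exists>y\<in>Kseq (Suc n). x - y \<in> Yrel Y (Kseq n)"
      using sub_0[OF Y_sub] by (intro bexI[of _ x]) simp_all
  qed
  have i: "inj_at (Yrel Y (Kseq n), Kseq n) (Kseq (Suc n), Kseq n)" unfolding inj_at_def by simp
  have h: "ind_hom (Yrel Y (Kseq n), Kseq n) (Kseq (Suc n), Kseq n)"
    "ind_hom (Kseq (Suc n), Kseq n) (Kseq (Suc n), Yrel Y (Kseq n))"
    unfolding ind_hom_def fst_conv snd_conv using a by auto
  have ex: "exact_at (Yrel Y (Kseq n), Kseq n) (Kseq (Suc n), Kseq n) (Kseq (Suc n), Yrel Y (Kseq n))"
    using a by (intro exact_gen sub_0[OF K_sub] Y_sub) auto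
  show ?thesis unfolding short_exact_def using sq_YK sq_K sq_Y i h ex s by blast
qed

theorem corollary3p6:
  fixes G :: "'a::ordered_ab_group_add itself"
  defines "K \<equiv> (Kseq :: nat \<Rightarrow> 'a set)"
  shows
    \<comment> \<open>the three long exact sequences\<close>
    "(\<forall>Y. exact_seq0 (les (Qcx :: (nat \<Rightarrow> 'a set) \<times> _) (Ycx Y) (YQcx Y)))
     \<comment> \<open>degree 0: H^0(Q) = Q_0 and H^0(hat Y) = Q_0\<close>
     \<and> coh (Qcx :: (nat \<Rightarrow> 'a set) \<times> _) 0 = (K 1, K 0)
     \<and> (\<forall>Y. coh (Ycx Y :: (nat \<Rightarrow> 'a set) \<times> _) 0 = (K 1, K 0))
     \<comment> \<open>degrees n >= 1\<close>
     \<and> (\<forall>n\<ge>1. coh (Qcx :: (nat \<Rightarrow> 'a set) \<times> _) n = (K (Suc n), K n))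
     \<and> (\<forall>n\<ge>1. coh (Ycx YA :: (nat \<Rightarrow> 'a set) \<times> _) n = (K (Suc n), qA (K n)))
     \<and> (\<forall>n\<ge>1. coh (Ycx YAA :: (nat \<Rightarrow> 'a set) \<times> _) n = (K (Suc n), qAA (K n)))
     \<and> (\<forall>n\<ge>1. fst (coh (Ycx YQ :: (nat \<Rightarrow> 'a set) \<times> _) n) = snd (coh (Ycx YQ) n))
     \<comment> \<open>H^n(hat Y / Q) = hat Y_n / Q_n, which is Y_{n+1}\<close>
     \<and> (\<forall>Y n. coh (YQcx Y :: (nat \<Rightarrow> 'a set) \<times> _) n = (Yrel Y (K (Suc n)), K (Suc n)))
     \<comment> \<open>in particular\<close>
     \<and> (\<forall>n\<ge>1. short_exact (qA (K n), K n) (K (Suc n), K n) (K (Suc n), qA (K n)))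
     \<and> (\<forall>n\<ge>1. short_exact (qAA (K n), K n) (K (Suc n), K n) (K (Suc n), qAA (K n)))
     \<and> (\<forall>n\<ge>1. coh (YQcx YQ :: (nat \<Rightarrow> 'a set) \<times> _) n = (K (Suc (Suc n)), K (Suc n)))"
  
proof -
  have c5: "\<forall>n\<ge>1. coh (Ycx YA :: (nat \<Rightarrow> 'a set) \<times> _) n = (K (Suc n), qA (K n))"
    unfolding K_def by (auto simp: cohY)
  have c6: "\<forall>n\<ge>1. coh (Ycx YAA :: (nat \<Rightarrow> 'a set) \<times> _) n = (K (Suc n), qAA (K n))"
    unfolding K_def by (auto simp: cohY)
  have c7: "\<forall>n\<ge>1. fst (coh (Ycx YQ :: (nat \<Rightarrow> 'a set) \<times> _) n) = snd (coh (Ycx YQ) n)"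
    by (auto simp: cohY)
  have c11: "\<forall>n\<ge>1. coh (YQcx YQ :: (nat \<Rightarrow> 'a set) \<times> _) n = (K (Suc (Suc n)), K (Suc n))"
    unfolding K_def by (auto simp: cohYQ)
  have c9: "\<forall>n\<ge>1. short_exact (qA (K n), K n) (K (Suc n), K n) (K (Suc n), qA (K n))"
    unfolding K_def using short_ex[of YA] by (auto simp: short_ex[of YA, simplified])
  have c10: "\<forall>n\<ge>1. short_exact (qAA (K n), K n) (K (Suc n), K n) (K (Suc n), qAA (K n))"
    unfolding K_def by (auto simp: short_ex[of YAA, simplified])
  have c2: "coh (Qcx :: (nat \<Rightarrow> 'a set) \<times> _) 0 = (K 1, K 0)" unfolding K_def by (simp add: cohQ)
  have c3: "\<forall>Y. coh (Ycx Y :: (nat \<Rightarrow> 'a set) \<times> _) 0 = (K 1, K 0)" unfolding K_def by (simp add: cohY)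
  have c4: "\<forall>n\<ge>1. coh (Qcx :: (nat \<Rightarrow> 'a set) \<times> _) n = (K (Suc n), K n)" unfolding K_def by (simp add: cohQ)
  have c8: "\<forall>Y n. coh (YQcx Y :: (nat \<Rightarrow> 'a set) \<times> _) n = (Yrel Y (K (Suc n)), K (Suc n))"
    unfolding K_def by (simp add: cohYQ)
  have c1: "\<forall>Y. exact_seq0 (les (Qcx :: (nat \<Rightarrow> 'a set) \<times> _) (Ycx Y) (YQcx Y))" using exact_les by blast
  show ?thesis using c1 c2 c3 c4 c5 c6 c7 c8 c9 c10 c11 by blast
qed

end
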